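(* Let $\mathcal{C}\subseteq\mathcal{I}$ and let $f$ be a nonnegative real-valued function on partitions of $\mathcal{C}$ that is monotone and subadditive on the partition semilattice (with respect to refinement and join). Then the instance-independent pricing function $p(\mathbf{Q})=f(\mathcal{P}_{\mathbf{Q}}\cap\mathcal{C})$ is arbitrage-free.
   Context: $\mathcal{I}$ is a countable nonempty set of database instances; queries are deterministic functions on $\mathcal{I}$; a query bundle is a finite tuple of queries from a language $\mathcal{L}$, evaluated componentwise; $B(\mathcal{L})$ is the set of bundles, closed under concatenation $\mathbf{Q}_1,\mathbf{Q}_2$. $\mathcal{P}_{\mathbf{Q}}$ is the partition of $\mathcal{I}$ into the equivalence classes of $D\sim D'\iff\mathbf{Q}(D)=\mathbf{Q}(D')$. For a partition $\mathcal{P}$ of $\mathcal{I}$, its restriction is $\mathcal{P}\cap\mathcal{C}=\{B\cap\mathcal{C}:B\in\mathcal{P},\,B\cap\mathcal{C}\ne\emptyset\}$. $\mathcal{P}_1\succeq\mathcal{P}_2$ means each block of $\mathcal{P}_1$ is contained in a block of $\mathcal{P}_2$; the join $\mathcal{P}_1\vee\mathcal{P}_2$ has as blocks the nonempty intersections of a block of $\mathcal{P}_1$ with a block of $\mathcal{P}_2$. $f$ monotone: $\mathcal{P}_1\succeq\mathcal{P}_2\Rightarrow f(\mathcal{P}_1)\ge f(\mathcal{P}_2)$; subadditive: $f(\mathcal{P}_1\vee\mathcal{P}_2)\le f(\mathcal{P}_1)+f(\mathcal{P}_2)$. An instance-independent pricing function $p$ is arbitrage-free if (i) whenever for all $D',D''\in\mathcal{I}$,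 $\mathbf{Q}_2(D')=\mathbf{Q}_2(D'')$ implies $\mathbf{Q}_1(D')=\mathbf{Q}_1(D'')$, we have $p(\mathbf{Q}_2)\ge p(\mathbf{Q}_1)$; and (ii) $p(\mathbf{Q}_1,\mathbf{Q}_2)\le p(\mathbf{Q}_1)+p(\mathbf{Q}_2)$ for all bundles. *)

theory Defs
  imports Complex_Main "HOL-Library.Disjoint_Sets" "HOL-Library.Countable_Set"
begin

text \<open>The set of bundles over a language L is lists L; concatenation is append.\<close>

definition eval_bundle :: "('i \<Rightarrow> 'o) list \<Rightarrow> 'i \<Rightarrow> 'o list" where
  "eval_bundle Q D = map (\<lambda>q. q D) Q"

definition query_partition :: "'i set \<Rightarrow> ('i \<Rightarrow> 'o) list \<Rightarrow> 'i set set" where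
  "query_partition I Q = {{D' \<in> I. eval_bundle Q D' = eval_bundle Q D} | D. D \<in> I}"

definition restrict_partition :: "'i set set \<Rightarrow> 'i set \<Rightarrow> 'i set set" where
  "restrict_partition P C = {B \<inter> C | B. B \<in> P \<and> B \<inter> C \<noteq> {}}"

text \<open>refines P1 P2 means P1 \<succeq> P2: each block of P1 lies in a block of P2.\<close>
definition refines :: "'i set set \<Rightarrow> 'i set set \<Rightarrow> bool" where
  "refines P1 P2 \<longleftrightarrow> (\<forall>B1\<in>P1. \<exists>B2\<in>P2. B1 \<subseteq> B2)"

definition partition_join :: "'i set set \<Rightarrow> 'i set set \<Rightarrow> 'i set set" where
  "partition_join P1 P2 = {B1 \<inter> B2 | B1 B2. B1 \<in> P1 \<and> B2 \<in> P2 \<and> B1 \<inter> B2 \<noteq> {}}"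

definition monotone_partition_fun :: "'i set \<Rightarrow> ('i set set \<Rightarrow> real) \<Rightarrow> bool" where
  "monotone_partition_fun C f \<longleftrightarrow>
     (\<forall>P1 P2. partition_on C P1 \<longrightarrow> partition_on C P2 \<longrightarrow> refines P1 P2 \<longrightarrow> f P1 \<ge> f P2)"

definition subadditive_partition_fun :: "'i set \<Rightarrow> ('i set set \<Rightarrow> real) \<Rightarrow> bool" where
  "subadditive_partition_fun C f \<longleftrightarrow>
     (\<forall>P1 P2. partition_on C P1 \<longrightarrow> partition_on C P2 \<longrightarrow>
        f (partition_join P1 P2) \<le> f P1 + f P2)"

definition arbitrage_free :: "'i set \<Rightarrow> ('i \<Rightarrow> 'o) set \<Rightarrow> (('i \<Rightarrow> 'o) list \<Rightarrow> real) \<Rightarrow> bool" where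
  "arbitrage_free I L p \<longleftrightarrow>
     (\<forall>Q1\<in>lists L. \<forall>Q2\<in>lists L.
        (\<forall>D'\<in>I. \<forall>D''\<in>I. eval_bundle Q2 D' = eval_bundle Q2 D'' \<longrightarrow>
                          eval_bundle Q1 D' = eval_bundle Q1 D'') \<longrightarrow> p Q2 \<ge> p Q1)
   \<and> (\<forall>Q1\<in>lists L. \<forall>Q2\<in>lists L. p (Q1 @ Q2) \<le> p Q1 + p Q2)"

end

theory Submission
  imports Defs
begin

definition cls :: "'i set \<Rightarrow> ('i \<Rightarrow> 'o) list \<Rightarrow> 'i \<Rightarrow> 'i set" where
  "cls I Q x = {D'\<in>I. eval_bundle Q D' = eval_bundle Q x}"

lemma cls_mem: "x \<in> I \<Longrightarrow> x \<in> cls I Q x" unfolding cls_def by auto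

lemma cls_eq: "y \<in> cls I Q x \<Longrightarrow> cls I Q y = cls I Q x" unfolding cls_def by auto

lemma qp_alt: "query_partition I Q = {cls I Q D | D. D \<in> I}"
  unfolding query_partition_def cls_def by simp

lemma restr_char:
  assumes "C \<subseteq> I"
  shows "restrict_partition (query_partition I Q) C = {cls I Q x \<inter> C | x. x \<in> C}"
  unfolding qp_alt restrict_partition_def
proof (rule set_eqI, rule iffI)
  fix B assume "B \<in> {B \<inter> C |B. B \<in> {cls I Q D |D. D \<in> I} \<and> B \<inter> C \<noteq> {}}"
  then obtain D where D: "B = cls I Q D \<inter> C" "cls I Q D \<inter> C \<noteq> {}"
    by auto
  then obtain x where x: "x \<in> cls I Q D" "x \<in> C" by auto
  have "cls I Q x = cls I Q D" using x(1) by (rule cls_eq)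
  with x D show "B \<in> {cls I Q x \<inter> C | x. x \<in> C}" by auto
next
  fix B assume "B \<in> {cls I Q x \<inter> C | x. x \<in> C}"
  then obtain x where x: "x \<in> C" "B = cls I Q x \<inter> C" by auto
  have xI: "x \<in> I" using x assms by auto
  hence "x \<in> cls I Q x \<inter> C" using x cls_mem by auto
  hence "cls I Q x \<inter> C \<noteq> {}" by auto
  moreover have "cls I Q x \<in> {cls I Q D |D. D \<in> I}" using xI by auto
  ultimately show "B \<in> {B \<inter> C |B. B \<in> {cls I Q D |D. D \<in> I} \<and> B \<inter> C \<noteq> {}}"
    using x by auto
qed

lemma restr_part:
  assumes "C \<subseteq> I"
  shows "partition_on C {cls I Q x \<inter> C | x. x \<in> C}"
  unfolding partition_on_def
proof (intro conjI)
  show "\<Union> {cls I Q x \<inter> C | x. x \<in> C} = C"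
  proof
    show "\<Union> {cls I Q x \<inter> C | x. x \<in> C} \<subseteq> C" by auto
    show "C \<subseteq> \<Union> {cls I Q x \<inter> C | x. x \<in> C}"
    proof
      fix x assume xC: "x \<in> C"
      have "x \<in> I" using xC assms by auto
      hence "x \<in> cls I Q x \<inter> C" using cls_mem xC by auto
      moreover have "cls I Q x \<inter> C \<in> {cls I Q x \<inter> C | x. x \<in> C}" using xC by auto
      ultimately show "x \<in> \<Union> {cls I Q x \<inter> C | x. x \<in> C}" by (rule UnionI[rotated])
    qed
  qed
  show "disjoint {cls I Q x \<inter> C | x. x \<in> C}"
  proof (rule disjointI)
    fix a b assume "a \<in> {cls I Q x \<inter> C | x. x \<in> C}" "b \<in> {cls I Q x \<inter> C | x. x \<in> C}" "a \<noteq> b"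
    then obtain x y where a: "a = cls I Q x \<inter> C" and b: "b = cls I Q y \<inter> C" by auto
    show "a \<inter> b = {}"
    proof (rule ccontr)
      assume "a \<inter> b \<noteq> {}"
      then obtain z where "z \<in> cls I Q x" "z \<in> cls I Q y" using a b by auto
      hence "cls I Q x = cls I Q y" using cls_eq by metis
      thus False using a b \<open>a \<noteq> b\<close> by simp
    qed
  qed
  show "{} \<notin> {cls I Q x \<inter> C | x. x \<in> C}"
  proof
    assume "{} \<in> {cls I Q x \<inter> C | x. x \<in> C}"
    then obtain x where xC: "x \<in> C" and e: "{} = cls I Q x \<inter> C" by auto
    have "x \<in> cls I Q x" using assms xC by (intro cls_mem) auto
    thus False using e xC by auto
  qed
qed

lemma eval_app: "eval_bundle (Q1 @ Q2) a = eval_bundle (Q1 @ Q2) b \<longleftrightarrow>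
   eval_bundle Q1 a = eval_bundle Q1 b \<and> eval_bundle Q2 a = eval_bundle Q2 b"
  unfolding eval_bundle_def by auto

lemma cls_app: "cls I (Q1 @ Q2) x = cls I Q1 x \<inter> cls I Q2 x"
  unfolding cls_def by (auto simp: eval_app)

lemma join_eq:
  assumes "C \<subseteq> I"
  shows "{cls I (Q1@Q2) x \<inter> C | x. x \<in> C} =
    partition_join {cls I Q1 x \<inter> C | x. x \<in> C} {cls I Q2 x \<inter> C | x. x \<in> C}"
  unfolding partition_join_def
proof (rule set_eqI, rule iffI)
  fix B assume "B \<in> {cls I (Q1@Q2) x \<inter> C | x. x \<in> C}"
  then obtain x where x: "x \<in> C" "B = cls I (Q1@Q2) x \<inter> C" by auto
  have xI: "x \<in> I" using x assms by auto
  have B: "B = (cls I Q1 x \<inter> C) \<inter> (cls I Q2 x \<inter> C)" using x by (auto simp: cls_app)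
  have "x \<in> cls I Q1 x" "x \<in> cls I Q2 x" using xI by (auto intro: cls_mem)
  hence "x \<in> B" using B x by auto
  hence ne: "B \<noteq> {}" by auto
  have m1: "(cls I Q1 x \<inter> C) \<in> {cls I Q1 x \<inter> C | x. x \<in> C}" using x by auto
  have m2: "(cls I Q2 x \<inter> C) \<in> {cls I Q2 x \<inter> C | x. x \<in> C}" using x by auto
  show "B \<in> {B1 \<inter> B2 |B1 B2. B1 \<in> {cls I Q1 x \<inter> C | x. x \<in> C} \<and> B2 \<in> {cls I Q2 x \<inter> C | x. x \<in> C} \<and> B1 \<inter> B2 \<noteq> {}}"
    apply (rule CollectI)
    apply (rule exI[of _ "cls I Q1 x \<inter> C"], rule exI[of _ "cls I Q2 x \<inter> C"])
    using B ne m1 m2 by simp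
next
  fix B assume "B \<in> {B1 \<inter> B2 |B1 B2. B1 \<in> {cls I Q1 x \<inter> C | x. x \<in> C} \<and> B2 \<in> {cls I Q2 x \<inter> C | x. x \<in> C} \<and> B1 \<inter> B2 \<noteq> {}}"
  then obtain x y where xy: "B = (cls I Q1 x \<inter> C) \<inter> (cls I Q2 y \<inter> C)" "B \<noteq> {}"
    by auto
  then obtain z where z: "z \<in> B" by auto
  have zC: "z \<in> C" using z xy by auto
  have e1: "cls I Q1 z = cls I Q1 x" using z xy by (intro cls_eq) auto
  have e2: "cls I Q2 z = cls I Q2 y" using z xy by (intro cls_eq) auto
  have "B = cls I (Q1@Q2) z \<inter> C" using xy(1) e1 e2 by (auto simp: cls_app)
  thus "B \<in> {cls I (Q1@Q2) x \<inter> C | x. x \<in> C}" using zC by auto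
qed

theorem lemma24:
  fixes I C :: "'i set" and L :: "('i \<Rightarrow> 'o) set" and f :: "'i set set \<Rightarrow> real"
  assumes "countable I" and "I \<noteq> {}"
    and "C \<subseteq> I"
    and "\<And>P. partition_on C P \<Longrightarrow> f P \<ge> 0"
    and "monotone_partition_fun C f"
    and "subadditive_partition_fun C f"
  shows "arbitrage_free I L (\<lambda>Q. f (restrict_partition (query_partition I Q) C))"
proof -
  define R where "R = (\<lambda>Q :: ('i \<Rightarrow> 'o) list. {cls I Q x \<inter> C | x. x \<in> C})"
  have RR: "\<And>Q. restrict_partition (query_partition I Q) C = R Q"
    unfolding R_def by (rule restr_char[OF assms(3)])
  have P: "\<And>Q. partition_on C (R Q)" unfolding R_def by (rule restr_part[OF assms(3)])
  have mono: "f (R Q1) \<le> f (R Q2)"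
    if H: "\<forall>D'\<in>I. \<forall>D''\<in>I. eval_bundle Q2 D' = eval_bundle Q2 D'' \<longrightarrow>
                          eval_bundle Q1 D' = eval_bundle Q1 D''" for Q1 Q2
  proof -
    have "refines (R Q2) (R Q1)"
      unfolding refines_def
    proof
      fix B assume "B \<in> R Q2"
      then obtain x where x: "x \<in> C" "B = cls I Q2 x \<inter> C" unfolding R_def by auto
      have xI: "x \<in> I" using x assms(3) by auto
      have "cls I Q2 x \<subseteq> cls I Q1 x"
      proof
        fix y assume "y \<in> cls I Q2 x"
        hence yI: "y \<in> I" and e: "eval_bundle Q2 y = eval_bundle Q2 x" unfolding cls_def by auto
        have "eval_bundle Q1 y = eval_bundle Q1 x" using H yI xI e by (meson)
        thus "y \<in> cls I Q1 x" using yI unfolding cls_def by simp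
      qed
      hence "B \<subseteq> cls I Q1 x \<inter> C" using x by auto
      moreover have "cls I Q1 x \<inter> C \<in> R Q1" using x unfolding R_def by auto
      ultimately show "\<exists>B2\<in>R Q1. B \<subseteq> B2" by (rule bexI)
    qed
    with assms(5) P[of Q1] P[of Q2] show ?thesis unfolding monotone_partition_fun_def by meson
  qed
  have sub: "f (R (Q1 @ Q2)) \<le> f (R Q1) + f (R Q2)" for Q1 Q2
  proof -
    have "R (Q1 @ Q2) = partition_join (R Q1) (R Q2)" unfolding R_def by (rule join_eq[OF assms(3)])
    moreover have "f (partition_join (R Q1) (R Q2)) \<le> f (R Q1) + f (R Q2)"
      using assms(6) P[of Q1] P[of Q2] unfolding subadditive_partition_fun_def by meson
    ultimately show ?thesis by simp
  qed
  show ?thesis unfolding arbitrage_free_def RR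
  proof (intro conjI ballI impI)
    fix Q1 Q2 :: "('i \<Rightarrow> 'o) list" assume "\<forall>D'\<in>I. \<forall>D''\<in>I. eval_bundle Q2 D' = eval_bundle Q2 D'' \<longrightarrow>
                          eval_bundle Q1 D' = eval_bundle Q1 D''"
    thus "f (R Q1) \<le> f (R Q2)" by (rule mono)
  next
    fix Q1 Q2 :: "('i \<Rightarrow> 'o) list" show "f (R (Q1 @ Q2)) \<le> f (R Q1) + f (R Q2)" by (rule sub)
  qed
qed

end
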